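(* For every $\epsilon\in(\tfrac12,1)$ there exists a forecasting competition (as defined in the context), with some number of events $m$ and some number of forecasters $n$, such that $p_0=\frac{2-\epsilon}{n}$ and the competition has no pure Nash equilibrium.
   Context: A forecasting competition with $m$ binary events and $n$ forecasters is the following game. Let $\mathcal{Y}=\{0,1\}^m$, $\mathcal{X}=[0,1]^m$, $Q$ a probability distribution on $\mathcal{Y}$, and $d(x,y)=\|x-y\|_2$. Each forecaster $i\in[n]$ chooses $x_i\in\mathcal{X}$; write $\bm{x}=(x_1,\dots,x_n)$ and $X_{\min}(\bm{x},y)=\arg\min_{x_j\in\bm{x}}\|x_j-y\|_2$. Forecaster $i$'s utility is $u_i(x_i,\bm{x}_{-i})=\mathbb{E}_{y\sim Q}\big[\mathbb{1}[x_i\in X_{\min}(\bm{x},y)]/|X_{\min}(\bm{x},y)|\big]$. Let $p_0=\min_{y\in\{0,1\}^m}Q(y)$. A pure Nash equilibrium is $\bm{x}$ with $u_i(x_i',\bm{x}_{-i})\le u_i(x_i,\bm{x}_{-i})$ for all $i$ and $x_i'\in\mathcal{X}$. *)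

theory Defs
  imports "HOL-Analysis.Analysis"
begin

text \<open>Outcomes y in {0,1}^m and forecasts x in [0,1]^m are represented as functions
  nat \<Rightarrow> real whose coordinates i < m carry the vector and which vanish for i \<ge> m.\<close>

definition Ycube :: "nat \<Rightarrow> (nat \<Rightarrow> real) set" where
  "Ycube m = {y. (\<forall>i<m. y i = 0 \<or> y i = 1) \<and> (\<forall>i. m \<le> i \<longrightarrow> y i = 0)}"

definition Xcube :: "nat \<Rightarrow> (nat \<Rightarrow> real) set" where
  "Xcube m = {x. (\<forall>i<m. 0 \<le> x i \<and> x i \<le> 1) \<and> (\<forall>i. m \<le> i \<longrightarrow> x i = 0)}"

definition dist2 :: "nat \<Rightarrow> (nat \<Rightarrow> real) \<Rightarrow> (nat \<Rightarrow> real) \<Rightarrow> real" where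
  "dist2 m x y = sqrt (\<Sum>i<m. (x i - y i)^2)"

definition is_distr :: "nat \<Rightarrow> ((nat \<Rightarrow> real) \<Rightarrow> real) \<Rightarrow> bool" where
  "is_distr m Q \<longleftrightarrow> (\<forall>y\<in>Ycube m. 0 \<le> Q y) \<and> (\<Sum>y\<in>Ycube m. Q y) = 1"

definition p0 :: "nat \<Rightarrow> ((nat \<Rightarrow> real) \<Rightarrow> real) \<Rightarrow> real" where
  "p0 m Q = Min (Q ` Ycube m)"

definition winners :: "nat \<Rightarrow> nat \<Rightarrow> (nat \<Rightarrow> nat \<Rightarrow> real) \<Rightarrow> (nat \<Rightarrow> real) \<Rightarrow> nat set" where
  "winners m n xs y = {j. j < n \<and> (\<forall>k<n. dist2 m (xs j) y \<le> dist2 m (xs k) y)}"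

definition utility :: "nat \<Rightarrow> nat \<Rightarrow> ((nat \<Rightarrow> real) \<Rightarrow> real) \<Rightarrow> (nat \<Rightarrow> nat \<Rightarrow> real) \<Rightarrow> nat \<Rightarrow> real" where
  "utility m n Q xs i =
     (\<Sum>y\<in>Ycube m. Q y * (if i \<in> winners m n xs y then 1 / real (card (winners m n xs y)) else 0))"

definition valid_profile :: "nat \<Rightarrow> nat \<Rightarrow> (nat \<Rightarrow> nat \<Rightarrow> real) \<Rightarrow> bool" where
  "valid_profile m n xs \<longleftrightarrow> (\<forall>j<n. xs j \<in> Xcube m)"

definition pure_NE :: "nat \<Rightarrow> nat \<Rightarrow> ((nat \<Rightarrow> real) \<Rightarrow> real) \<Rightarrow> (nat \<Rightarrow> nat \<Rightarrow> real) \<Rightarrow> bool" where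
  "pure_NE m n Q xs \<longleftrightarrow> valid_profile m n xs \<and>
     (\<forall>i<n. \<forall>x'\<in>Xcube m. utility m n Q (xs(i := x')) i \<le> utility m n Q xs i)"

end

theory Submission
  imports Defs
begin

definition vA :: "nat \<Rightarrow> real" where "vA = (\<lambda>i. 0)"
definition vB :: "nat \<Rightarrow> real" where "vB = (\<lambda>i. if i = 0 then 1 else 0)"
definition vC :: "nat \<Rightarrow> real" where "vC = (\<lambda>i. if i = 1 then 1 else 0)"
definition vD :: "nat \<Rightarrow> real" where "vD = (\<lambda>i. if i < 2 then 1 else 0)"

lemma dist2_2: "dist2 2 a b = sqrt ((a 0 - b 0)^2 + (a 1 - b 1)^2)"
  by (simp add: dist2_def numeral_2_eq_2 lessThan_Suc)

lemma dist2_nonneg: "0 \<le> dist2 m a b"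
  by (simp add: dist2_def sum_nonneg)

lemma dist2_zero: "dist2 2 a b = 0 \<longleftrightarrow> a 0 = b 0 \<and> a 1 = b 1"
proof -
  have "sqrt ((a 0 - b 0)^2 + (a 1 - b 1)^2) = 0 \<longleftrightarrow> (a 0 - b 0)^2 + (a 1 - b 1)^2 = 0" by simp
  also have "\<dots> \<longleftrightarrow> a 0 = b 0 \<and> a 1 = b 1" by (simp add: add_nonneg_eq_0_iff)
  finally show ?thesis by (simp add: dist2_2)
qed

lemma Ycube2: "Ycube 2 = {vA, vB, vC, vD}"
proof
  show "{vA, vB, vC, vD} \<subseteq> Ycube 2"
    by (auto simp: Ycube_def vA_def vB_def vC_def vD_def)
  show "Ycube 2 \<subseteq> {vA, vB, vC, vD}"
  proof
    fix y assume y: "y \<in> Ycube 2"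
    have y0: "y 0 = 0 \<or> y 0 = 1" and y1: "y 1 = 0 \<or> y 1 = 1" and yr: "\<And>i. 2 \<le> i \<Longrightarrow> y i = 0"
      using y by (auto simp: Ycube_def)
    have ye: "y = (\<lambda>i. if i = 0 then y 0 else if i = 1 then y 1 else 0)"
    proof
      fix i :: nat
      show "y i = (if i = 0 then y 0 else if i = 1 then y 1 else 0)"
        using yr[of i] by (cases "i = 0"; cases "i = 1"; auto)
    qed
    have "vA = (\<lambda>i. if i = 0 then 0 else if i = 1 then 0 else 0)"
         "vB = (\<lambda>i. if i = 0 then 1 else if i = 1 then 0 else 0)"
         "vC = (\<lambda>i. if i = 0 then 0 else if i = 1 then 1 else 0)"
         "vD = (\<lambda>i. if i = 0 then 1 else if i = 1 then 1 else 0)"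
      unfolding vA_def vB_def vC_def vD_def by (auto simp: fun_eq_iff less_2_cases_iff)
    note eqs = this
    show "y \<in> {vA, vB, vC, vD}"
    proof (cases "y 0 = 0")
      case h0: True
      show ?thesis
      proof (cases "y 1 = 0")
        case h1: True
        have "y = vA" using ye[unfolded h0 h1] eqs(1) by simp
        then show ?thesis by simp
      next
        case False
        then have h1: "y 1 = 1" using y1 by simp
        have "y = vC" using ye[unfolded h0 h1] eqs(3) by simp
        then show ?thesis by simp
      qed
    next
      case False
      then have h0: "y 0 = 1" using y0 by simp
      show ?thesis
      proof (cases "y 1 = 0")
        case h1: True
        have "y = vB" using ye[unfolded h0 h1] eqs(2) by simp
        then show ?thesis by simp
      next
        case False
        then have h1: "y 1 = 1" using y1 by simp
        have "y = vD" using ye[unfolded h0 h1] eqs(4) by simp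
        then show ?thesis by simp
      qed
    qed
  qed
qed

lemma vcoords[simp]: "vA 0 = 0" "vA 1 = 0" "vB 0 = 1" "vB 1 = 0" "vC 0 = 0" "vC 1 = 1" "vD 0 = 1" "vD 1 = 1"
  "vA (Suc 0) = 0" "vB (Suc 0) = 0" "vC (Suc 0) = 1" "vD (Suc 0) = 1"
  by (auto simp: vA_def vB_def vC_def vD_def)

lemma vdistinct: "vA \<noteq> vB" "vA \<noteq> vC" "vA \<noteq> vD" "vB \<noteq> vC" "vB \<noteq> vD" "vC \<noteq> vD"
proof -
  have a: "\<And>f g. f (0::nat) \<noteq> (g 0::real) \<Longrightarrow> f \<noteq> g" "\<And>f g. f (1::nat) \<noteq> (g 1::real) \<Longrightarrow> f \<noteq> g"
    by auto
  show "vA \<noteq> vB" by (rule a(1)) simp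
  show "vA \<noteq> vC" by (rule a(2)) simp
  show "vA \<noteq> vD" by (rule a(1)) simp
  show "vB \<noteq> vC" by (rule a(1)) simp
  show "vB \<noteq> vD" by (rule a(2)) simp
  show "vC \<noteq> vD" by (rule a(1)) simp
qed

lemma Ycube_sub: "Ycube m \<subseteq> Xcube m"
  by (auto simp: Ycube_def Xcube_def)

lemma finY: "finite (Ycube 2)" by (simp add: Ycube2)

lemma exists_winner:
  fixes n :: nat
  assumes "0 < n"
  shows "\<exists>j<n. \<forall>k<n. dist2 m (xs j) y \<le> dist2 m (xs k) y"
proof -
  let ?f = "\<lambda>j. dist2 m (xs j) y"
  have ne: "?f ` {..<n} \<noteq> {}" using assms by auto
  have fin: "finite (?f ` {..<n})" by simp
  have "Min (?f ` {..<n}) \<in> ?f ` {..<n}" using Min_in[OF fin ne] .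
  then obtain j where j: "j < n" "?f j = Min (?f ` {..<n})" by auto
  have "\<forall>k<n. ?f j \<le> ?f k" using j fin by (auto intro: Min_le)
  with j show ?thesis by blast
qed

lemma winners_ne: "0 < n \<Longrightarrow> winners m n xs y \<noteq> {}"
  using exists_winner[of n m xs y] by (auto simp: winners_def)

lemma winners_sub: "winners m n xs y \<subseteq> {..<n}"
  by (auto simp: winners_def)

lemma winners_fin: "finite (winners m n xs y)"
  by (rule finite_subset[OF winners_sub]) simp

lemma winners_zero:
  assumes "j0 < n" "dist2 m (xs j0) y = 0"
  shows "winners m n xs y = {j. j < n \<and> dist2 m (xs j) y = 0}"
proof -
  have "\<And>j. j < n \<Longrightarrow> (\<forall>k<n. dist2 m (xs j) y \<le> dist2 m (xs k) y) \<longleftrightarrow> dist2 m (xs j) y = 0"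
  proof
    fix j assume "j < n" "\<forall>k<n. dist2 m (xs j) y \<le> dist2 m (xs k) y"
    then have "dist2 m (xs j) y \<le> dist2 m (xs j0) y" using assms(1) by blast
    then have "dist2 m (xs j) y \<le> 0" using assms(2) by simp
    then show "dist2 m (xs j) y = 0" using dist2_nonneg[of m "xs j" y] by linarith
  next
    fix j assume "j < n" "dist2 m (xs j) y = 0"
    then show "\<forall>k<n. dist2 m (xs j) y \<le> dist2 m (xs k) y" by (simp add: dist2_nonneg)
  qed
  then show ?thesis by (auto simp: winners_def)
qed

lemma util_sum:
  assumes "0 < n" "finite (Ycube m)"
  shows "(\<Sum>i<n. utility m n Q xs i) = (\<Sum>y\<in>Ycube m. Q y)"
proof -
  have inner: "(\<Sum>i<n. (if i \<in> winners m n xs y then 1 / real (card (winners m n xs y)) else 0)) = 1" for y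
  proof -
    let ?W = "winners m n xs y"
    have "(\<Sum>i<n. (if i \<in> ?W then 1 / real (card ?W) else 0)) = (\<Sum>i\<in>{..<n} \<inter> ?W. 1 / real (card ?W))"
      by (rule sum.inter_restrict[symmetric]) simp
    also have "{..<n} \<inter> ?W = ?W" using winners_sub by blast
    also have "(\<Sum>i\<in>?W. 1 / real (card ?W)) = 1"
      using winners_ne[OF assms(1)] winners_fin[of m n xs y] by simp
    finally show ?thesis .
  qed
  have "(\<Sum>i<n. utility m n Q xs i) = (\<Sum>y\<in>Ycube m. \<Sum>i<n. Q y * (if i \<in> winners m n xs y then 1 / real (card (winners m n xs y)) else 0))"
    unfolding utility_def by (rule sum.swap)
  also have "\<dots> = (\<Sum>y\<in>Ycube m. Q y * (\<Sum>i<n. (if i \<in> winners m n xs y then 1 / real (card (winners m n xs y)) else 0)))"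
    by (simp add: sum_distrib_left)
  also have "\<dots> = (\<Sum>y\<in>Ycube m. Q y)" using inner by simp
  finally show ?thesis .
qed

lemma util_ge1:
  assumes "finite (Ycube m)" "\<forall>y\<in>Ycube m. 0 \<le> Q y" "y \<in> Ycube m" "i \<in> winners m n xs y"
  shows "Q y / real (card (winners m n xs y)) \<le> utility m n Q xs i"
proof -
  let ?g = "\<lambda>y. Q y * (if i \<in> winners m n xs y then 1 / real (card (winners m n xs y)) else 0)"
  have "?g y \<le> sum ?g (Ycube m)"
    by (rule member_le_sum) (use assms in auto)
  then show ?thesis using assms(4) by (simp add: utility_def)
qed

lemma util_ge2:
  assumes "finite (Ycube m)" "\<forall>y\<in>Ycube m. 0 \<le> Q y" "y \<in> Ycube m" "y' \<in> Ycube m" "y \<noteq> y'"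
    "i \<in> winners m n xs y" "i \<in> winners m n xs y'"
  shows "Q y / real (card (winners m n xs y)) + Q y' / real (card (winners m n xs y')) \<le> utility m n Q xs i"
proof -
  let ?g = "\<lambda>y. Q y * (if i \<in> winners m n xs y then 1 / real (card (winners m n xs y)) else 0)"
  have "sum ?g {y, y'} \<le> sum ?g (Ycube m)"
    by (rule sum_mono2) (use assms in auto)
  then show ?thesis using assms(5-7) by (simp add: utility_def)
qed

lemma vert_eq:
  assumes "y \<in> Ycube 2" "y' \<in> Ycube 2" "y 0 = y' 0" "y 1 = y' 1"
  shows "y = y'"
  using assms unfolding Ycube2 by auto

definition QQ :: "real \<Rightarrow> real \<Rightarrow> real \<Rightarrow> (nat \<Rightarrow> real) \<Rightarrow> real" where
  "QQ p qB x y = (if y = vA then p else if y = vB then qB else if y = vC then p else if y = vD then x else 0)"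

lemma QQ_vals[simp]: "QQ p qB x vA = p" "QQ p qB x vB = qB" "QQ p qB x vC = p" "QQ p qB x vD = x"
  using vdistinct by (auto simp: QQ_def)

lemma no_NE:
  fixes n :: nat and p qB x :: real
  assumes pp: "0 < p" and qBp: "p \<le> qB" and xp: "p \<le> x" and tot: "2*p + qB + x = 1"
    and np: "1 < real n * p" and big: "p * (real n + 4) < 2"
    and hx1: "p < x/2 + p/3" and hx2: "x < 3*p/2" and hB: "(real n - 3) * x < 2 * qB"
  shows "\<not> pure_NE 2 n (QQ p qB x) xs"
proof
  let ?Q = "QQ p qB x"
  assume NE: "pure_NE 2 n ?Q xs"
  have n0: "0 < n" using np pp by (cases n) auto
  have Qnn: "\<forall>y\<in>Ycube 2. 0 \<le> ?Q y" using pp qBp xp by (auto simp: Ycube2)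
  have Qge: "\<forall>y\<in>Ycube 2. p \<le> ?Q y" using pp qBp xp by (auto simp: Ycube2)
  have Qsum: "(\<Sum>y\<in>Ycube 2. ?Q y) = 1" using tot vdistinct by (simp add: Ycube2)
  have dev: "\<And>i x'. i < n \<Longrightarrow> x' \<in> Xcube 2 \<Longrightarrow> utility 2 n ?Q (xs(i := x')) i \<le> utility 2 n ?Q xs i"
    using NE by (auto simp: pure_NE_def)
  define u where "u i = utility 2 n ?Q xs i" for i
  define K where "K y = {j. j < n \<and> dist2 2 (xs j) y = 0}" for y
  have Kfin: "finite (K y)" for y by (auto simp: K_def)
  have Ksub: "K y \<subseteq> {..<n}" for y by (auto simp: K_def)
  have usum: "(\<Sum>i<n. u i) = 1" unfolding u_def using util_sum[OF n0 finY] Qsum by simp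
  have devb: "?Q y / (real (card (K y)) + 1) \<le> u i" if i: "i < n" and y: "y \<in> Ycube 2" for i y
  proof -
    let ?xs' = "xs(i := y)"
    have iat: "dist2 2 (?xs' i) y = 0" by (simp add: dist2_zero)
    have W': "winners 2 n ?xs' y = {j. j < n \<and> dist2 2 (?xs' j) y = 0}"
      by (rule winners_zero[where xs="?xs'", OF i iat])
    have sub: "winners 2 n ?xs' y \<subseteq> insert i (K y)" unfolding W' K_def by auto
    have "card (winners 2 n ?xs' y) \<le> card (insert i (K y))" by (rule card_mono) (use Kfin sub in auto)
    also have "\<dots> \<le> card (K y) + 1" by (simp add: card_insert_le_m1 card_insert_if Kfin)
    finally have c1: "real (card (winners 2 n ?xs' y)) \<le> real (card (K y)) + 1" by linarith
    have iW: "i \<in> winners 2 n ?xs' y" unfolding W' using i iat by auto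
    have c0: "0 < real (card (winners 2 n ?xs' y))"
      using iW winners_fin[of 2 n ?xs' y] card_gt_0_iff by force
    have "?Q y / (real (card (K y)) + 1) \<le> ?Q y / real (card (winners 2 n ?xs' y))"
      by (rule divide_left_mono) (use Qnn y c0 c1 in auto)
    also have "\<dots> \<le> utility 2 n ?Q ?xs' i" by (rule util_ge1[OF finY Qnn y iW])
    also have "\<dots> \<le> u i" unfolding u_def by (rule dev[OF i]) (use y Ycube_sub in auto)
    finally show ?thesis .
  qed
  have occ: "K y \<noteq> {}" if y: "y \<in> Ycube 2" for y
  proof
    assume e: "K y = {}"
    have "\<forall>i<n. p \<le> u i"
    proof (intro allI impI)
      fix i assume i: "i < n"
      have "p \<le> ?Q y" using Qge y by auto
      also have "\<dots> = ?Q y / (real (card (K y)) + 1)" using e by simp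
      also have "\<dots> \<le> u i" by (rule devb[OF i y])
      finally show "p \<le> u i" .
    qed
    then have "(\<Sum>i<n. p) \<le> (\<Sum>i<n. u i)" by (intro sum_mono) auto
    then have "real n * p \<le> 1" using usum by simp
    then show False using np by linarith
  qed
  have Wk: "winners 2 n xs y = K y" if y: "y \<in> Ycube 2" for y
  proof -
    obtain j where "j \<in> K y" using occ[OF y] by auto
    then have "j < n" "dist2 2 (xs j) y = 0" by (auto simp: K_def)
    from winners_zero[where xs=xs, OF this] show ?thesis by (simp add: K_def)
  qed
  have uform: "u i = (\<Sum>y\<in>Ycube 2. ?Q y * (if i \<in> K y then 1 / real (card (K y)) else 0))" for i
    unfolding u_def utility_def by (rule sum.cong) (auto simp: Wk)
  have Kdisj: "K y \<inter> K y' = {}" if "y \<in> Ycube 2" "y' \<in> Ycube 2" "y \<noteq> y'" for y y'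
  proof (rule ccontr)
    assume "K y \<inter> K y' \<noteq> {}"
    then obtain j where "j \<in> K y" "j \<in> K y'" by auto
    then have "y 0 = y' 0" "y 1 = y' 1" by (auto simp: K_def dist2_zero)
    then show False using vert_eq that by blast
  qed
  have S2: "\<exists>y\<in>Ycube 2. i \<in> K y" if i: "i < n" for i
  proof (rule ccontr)
    assume "\<not> ?thesis"
    then have "u i = 0" unfolding uform by (intro sum.neutral) auto
    moreover have "p / (real (card (K vA)) + 1) \<le> u i" using devb[OF i, of vA] by (simp add: Ycube2)
    moreover have "0 < p / (real (card (K vA)) + 1)" using pp by simp
    ultimately show False by linarith
  qed
  have uvert: "u i = ?Q y / real (card (K y))" if y: "y \<in> Ycube 2" and iy: "i \<in> K y" for i y
  proof -
    have "u i = (\<Sum>y'\<in>Ycube 2. if y' = y then ?Q y / real (card (K y)) else 0)"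
      unfolding uform
    proof (rule sum.cong)
      fix y' assume y': "y' \<in> Ycube 2"
      show "?Q y' * (if i \<in> K y' then 1 / real (card (K y')) else 0) = (if y' = y then ?Q y / real (card (K y)) else 0)"
        using Kdisj[OF y y'] iy by auto
    qed simp
    also have "\<dots> = ?Q y / real (card (K y))" using y finY by simp
    finally show ?thesis .
  qed
  have kpos: "1 \<le> card (K y)" if "y \<in> Ycube 2" for y
    using occ[OF that] Kfin[of y] by (simp add: Suc_le_eq card_gt_0_iff)
  have yA: "vA \<in> Ycube 2" and yB: "vB \<in> Ycube 2" and yC: "vC \<in> Ycube 2" and yD: "vD \<in> Ycube 2"
    by (auto simp: Ycube2)
  have cardsum: "card (K vA) + card (K vB) + card (K vC) + card (K vD) \<le> n"
  proof -
    have d: "K vA \<inter> K vB = {}" "K vA \<inter> K vC = {}" "K vA \<inter> K vD = {}" "K vB \<inter> K vC = {}" "K vB \<inter> K vD = {}" "K vC \<inter> K vD = {}"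
      using Kdisj yA yB yC yD vdistinct by auto
    have "card (K vA \<union> K vB \<union> K vC \<union> K vD) = card (K vA) + card (K vB) + card (K vC) + card (K vD)"
      using d Kfin by (simp add: card_Un_disjoint Int_Un_distrib2)
    moreover have "card (K vA \<union> K vB \<union> K vC \<union> K vD) \<le> card {..<n}"
      by (rule card_mono) (use Ksub in auto)
    ultimately show ?thesis by simp
  qed
  have Mstep: "p / 2 < u i" if i: "i < n" for i
  proof (rule ccontr)
    assume "\<not> p / 2 < u i"
    then have ui: "u i \<le> p / 2" by simp
    have b: "2 * ?Q y \<le> p * (real (card (K y)) + 1)" if y: "y \<in> Ycube 2" for y
    proof -
      have "?Q y / (real (card (K y)) + 1) \<le> p / 2" using devb[OF i y] ui by linarith
      then show ?thesis by (simp add: divide_le_eq field_simps)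
    qed
    have bA: "2 * p \<le> p * (real (card (K vA)) + 1)" using b[OF yA] by simp
    have bB: "2 * qB \<le> p * (real (card (K vB)) + 1)" using b[OF yB] by simp
    have bC: "2 * p \<le> p * (real (card (K vC)) + 1)" using b[OF yC] by simp
    have bD: "2 * x \<le> p * (real (card (K vD)) + 1)" using b[OF yD] by simp
    have cs: "real (card (K vA)) + real (card (K vB)) + real (card (K vC)) + real (card (K vD)) \<le> real n"
      using cardsum by linarith
    have "p * (real (card (K vA)) + real (card (K vB)) + real (card (K vC)) + real (card (K vD))) \<le> p * real n"
      using cs pp by (intro mult_left_mono) auto
    then have "2 \<le> p * (real n + 4)" using bA bB bC bD tot by (simp add: algebra_simps)
    then show False using big by linarith
  qed
  have small_card: "card (K y) < k" if y: "y \<in> Ycube 2" and hk: "?Q y / real k \<le> p / 2" and k: "0 < k" for y k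
  proof (rule ccontr)
    assume "\<not> card (K y) < k"
    then have ck: "real k \<le> real (card (K y))" by simp
    obtain i where iy: "i \<in> K y" using occ[OF y] by auto
    then have i: "i < n" by (auto simp: K_def)
    have "u i = ?Q y / real (card (K y))" by (rule uvert[OF y iy])
    also have "\<dots> \<le> ?Q y / real k" by (rule divide_left_mono) (use Qnn y ck k in auto)
    finally have "u i \<le> p / 2" using hk by linarith
    then show False using Mstep[OF i] by linarith
  qed
  have kA: "card (K vA) = 1" using small_card[OF yA, of 2] kpos[OF yA] by simp
  have kC: "card (K vC) = 1" using small_card[OF yC, of 2] kpos[OF yC] by simp
  have kD: "card (K vD) < 3" using small_card[OF yD, of 3] hx2 by simp
  show False
  proof (cases "card (K vD) = 1")
    case kD1: True
    obtain i where KC: "K vC = {i}" using kC card_1_singletonE by blast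
    then have iC: "i \<in> K vC" by simp
    then have i: "i < n" by (auto simp: K_def)
    have ui: "u i = p" using uvert[OF yC iC] kC by simp
    let ?xs' = "xs(i := vD)"
    have iat: "dist2 2 (?xs' i) vD = 0" by (simp add: dist2_zero)
    have W'D: "winners 2 n ?xs' vD = {j. j < n \<and> dist2 2 (?xs' j) vD = 0}"
      by (rule winners_zero[where xs="?xs'", OF i iat])
    have subD: "winners 2 n ?xs' vD \<subseteq> insert i (K vD)" unfolding W'D K_def by auto
    have "card (winners 2 n ?xs' vD) \<le> card (insert i (K vD))" by (rule card_mono) (use Kfin subD in auto)
    also have "\<dots> \<le> 2" using kD1 Kfin[of vD] by (simp add: card_insert_if)
    finally have cD: "card (winners 2 n ?xs' vD) \<le> 2" .
    have iWD: "i \<in> winners 2 n ?xs' vD" unfolding W'D using i iat by auto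
    have dvert: "dist2 2 (xs k) vC = (if k \<in> K vA \<or> k \<in> K vD then 1 else sqrt 2)"
      if k: "k < n" "k \<noteq> i" for k
    proof -
      obtain y where y: "y \<in> Ycube 2" "k \<in> K y" using S2[OF k(1)] by blast
      have "y \<noteq> vC" using y(2) KC k(2) by auto
      then have "y = vA \<or> y = vB \<or> y = vD" using y(1) by (auto simp: Ycube2)
      moreover have "xs k 0 = y 0" "xs k 1 = y 1" using y(2) by (auto simp: K_def dist2_zero)
      moreover have "k \<notin> K vB" if "y \<noteq> vB" using Kdisj[OF yB y(1)] y(2) that by auto
      moreover have "k \<notin> K vA" if "y \<noteq> vA" using Kdisj[OF yA y(1)] y(2) that by auto
      moreover have "k \<notin> K vD" if "y \<noteq> vD" using Kdisj[OF yD y(1)] y(2) that by auto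
      ultimately show ?thesis using y(2) vdistinct by (auto simp: dist2_2)
    qed
    have dDC: "dist2 2 vD vC = 1" by (simp add: dist2_2)
    have iWC: "i \<in> winners 2 n ?xs' vC"
    proof -
      have "\<forall>k<n. dist2 2 (?xs' i) vC \<le> dist2 2 (?xs' k) vC"
      proof (intro allI impI)
        fix k assume k: "k < n"
        show "dist2 2 (?xs' i) vC \<le> dist2 2 (?xs' k) vC"
        proof (cases "k = i")
          case False
          then show ?thesis using dvert[OF k False] dDC by auto
        qed simp
      qed
      then show ?thesis using i by (simp add: winners_def)
    qed
    have subC: "winners 2 n ?xs' vC \<subseteq> insert i (K vA \<union> K vD)"
    proof
      fix j assume j: "j \<in> winners 2 n ?xs' vC"
      show "j \<in> insert i (K vA \<union> K vD)"
      proof (cases "j = i")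
        case False
        have jn: "j < n" using j by (simp add: winners_def)
        have "\<forall>k<n. dist2 2 (?xs' j) vC \<le> dist2 2 (?xs' k) vC" using j by (simp add: winners_def)
        then have "dist2 2 (?xs' j) vC \<le> dist2 2 (?xs' i) vC" using i by blast
        then have "dist2 2 (xs j) vC \<le> 1" using False dDC by simp
        moreover have "1 < sqrt (2::real)" by simp
        ultimately show ?thesis using dvert[OF jn False] by (auto split: if_splits)
      qed simp
    qed
    have "card (winners 2 n ?xs' vC) \<le> card (insert i (K vA \<union> K vD))" by (rule card_mono) (use Kfin subC in auto)
    also have "\<dots> \<le> card (K vA \<union> K vD) + 1" by (simp add: card_insert_if Kfin)
    also have "\<dots> \<le> card (K vA) + card (K vD) + 1" using card_Un_le[of "K vA" "K vD"] by simp
    finally have cC: "card (winners 2 n ?xs' vC) \<le> 3" using kA kD1 by simp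
    have posD: "0 < card (winners 2 n ?xs' vD)" using iWD winners_fin[of 2 n ?xs' vD] card_gt_0_iff by force
    have posC: "0 < card (winners 2 n ?xs' vC)" using iWC winners_fin[of 2 n ?xs' vC] card_gt_0_iff by force
    have "x / 2 \<le> x / real (card (winners 2 n ?xs' vD))"
      by (rule divide_left_mono) (use cD posD pp xp in auto)
    moreover have "p / 3 \<le> p / real (card (winners 2 n ?xs' vC))"
      by (rule divide_left_mono) (use cC posC pp in auto)
    moreover have "?Q vD / real (card (winners 2 n ?xs' vD)) + ?Q vC / real (card (winners 2 n ?xs' vC)) \<le> utility 2 n ?Q ?xs' i"
      by (rule util_ge2[OF finY Qnn yD yC _ iWD iWC]) (use vdistinct in auto)
    moreover have "utility 2 n ?Q ?xs' i \<le> u i" unfolding u_def by (rule dev[OF i]) (use yD Ycube_sub in auto)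
    ultimately have "x / 2 + p / 3 \<le> p" using ui by simp
    then show False using hx1 by linarith
  next
    case False
    then have kD2: "card (K vD) = 2" using kD kpos[OF yD] by linarith
    obtain i where iD: "i \<in> K vD" using occ[OF yD] by auto
    then have i: "i < n" by (auto simp: K_def)
    have ui: "u i = x / 2" using uvert[OF yD iD] kD2 by simp
    have kB: "real (card (K vB)) + 1 \<le> real n - 3" using cardsum kA kC kD2 by linarith
    have kBp: "0 < real (card (K vB)) + 1" by simp
    have "qB / (real n - 3) \<le> qB / (real (card (K vB)) + 1)"
      by (rule divide_left_mono) (use kB kBp qBp pp in auto)
    also have "\<dots> \<le> x / 2" using devb[OF i yB] ui by simp
    finally have "qB / (real n - 3) \<le> x / 2" .
    moreover have "0 < real n - 3" using kB by linarith
    ultimately have "2 * qB \<le> (real n - 3) * x" by (simp add: divide_le_eq field_simps)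
    then show False using hB by linarith
  qed
qed

theorem lemma4:
  fixes \<epsilon> :: real
  assumes "1/2 < \<epsilon>" and "\<epsilon> < 1"
  shows "\<exists>(m::nat) (n::nat) Q. 1 \<le> m \<and> 1 \<le> n \<and> is_distr m Q \<and>
           p0 m Q = (2 - \<epsilon>) / real n \<and> \<not> (\<exists>xs. pure_NE m n Q xs)"
proof -
  define n :: nat where "n = nat \<lceil>12 / (2*\<epsilon> - 1)\<rceil> + 1"
  define N where "N = real n"
  have d: "0 < 2*\<epsilon> - 1" using assms by linarith
  have t: "12 / (2*\<epsilon> - 1) \<le> real (nat \<lceil>12 / (2*\<epsilon> - 1)\<rceil>)"
    by (rule real_nat_ceiling_ge)
  have Nge: "12 / (2*\<epsilon> - 1) + 1 \<le> N" unfolding N_def n_def using t by simp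
  have nd: "12 + (2*\<epsilon> - 1) \<le> N * (2*\<epsilon> - 1)"
  proof -
    have "(12 / (2*\<epsilon> - 1) + 1) * (2*\<epsilon> - 1) \<le> N * (2*\<epsilon> - 1)"
      using Nge d by (intro mult_right_mono) auto
    moreover have "(12 / (2*\<epsilon> - 1) + 1) * (2*\<epsilon> - 1) = 12 + (2*\<epsilon> - 1)"
      using d by (simp add: distrib_right divide_simps)
    ultimately show ?thesis by simp
  qed
  have "12 \<le> 12 / (2*\<epsilon> - 1)" using d assms by (simp add: field_simps)
  then have N13: "13 \<le> N" using Nge by linarith
  have Npos: "0 < N" using N13 by simp
  define c where "c = 2 - \<epsilon>"
  define p where "p = c / N"
  define x where "x = (c + 1/2) / N"
  define qB where "qB = 1 - 2*p - x"
  have c1: "1 < c" "c < 3/2" using assms by (auto simp: c_def)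
  have pp: "0 < p" using c1 Npos by (simp add: p_def)
  have xp: "p \<le> x" using Npos by (simp add: p_def x_def divide_right_mono)
  have qBp: "p \<le> qB"
  proof -
    have "4*c + 1/2 \<le> N" using N13 c1 by linarith
    then have "(4*c + 1/2) / N \<le> 1" using Npos by simp
    moreover have "c/N + 2*(c/N) + (c+1/2)/N = (4*c+1/2)/N" by (simp add: add_divide_distrib)
    ultimately show ?thesis unfolding qB_def p_def x_def by linarith
  qed
  have tot: "2*p + qB + x = 1" by (simp add: qB_def)
  have np: "1 < real n * p" unfolding N_def[symmetric] p_def using Npos c1 by simp
  have eN: "\<epsilon> * N > 8 - 4*\<epsilon>" using nd N13 assms by (simp add: algebra_simps) 
  have big: "p * (real n + 4) < 2"
  proof -
    have "c * (N + 4) < 2 * N" using eN by (simp add: c_def algebra_simps)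
    then show ?thesis unfolding N_def[symmetric] p_def using Npos by (simp add: field_simps)
  qed
  have hx1: "p < x/2 + p/3" unfolding p_def x_def using Npos c1 by (simp add: field_simps)
  have hx2: "x < 3*p/2" unfolding p_def x_def using Npos c1 by (simp add: field_simps)
  have hB: "(real n - 3) * x < 2 * qB"
  proof -
    have "N * (3/2 - c) > 3*c - 1/2" using nd assms by (simp add: c_def algebra_simps)
    moreover have "N * (3/2 - c) = 3/2*N - N*c" by (simp add: field_simps)
    moreover have "(N - 3) * (c + 1/2) = N*c + N/2 - 3*c - 3/2" by (simp add: field_simps)
    ultimately have "(N - 3) * (c + 1/2) < 2 * N - 2 * (3*c + 1/2)" by argo
    then have "(N - 3) * (c + 1/2) / N < (2 * N - 2 * (3*c + 1/2)) / N"
      using Npos by (rule divide_strict_right_mono)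
    moreover have "(N - 3) * (c + 1/2) / N = (N - 3) * x" by (simp add: x_def)
    moreover have "(2 * N - 2 * (3*c + 1/2)) / N = 2 * qB" unfolding qB_def p_def x_def
      using Npos by (simp add: field_simps)
    ultimately show ?thesis unfolding N_def by simp
  qed
  let ?Q = "QQ p qB x"
  have dist: "is_distr 2 ?Q"
    unfolding is_distr_def using pp qBp xp tot vdistinct by (auto simp: Ycube2)
  have "p0 2 ?Q = p"
    unfolding p0_def
  proof (rule Min_eqI)
    show "finite (?Q ` Ycube 2)" using finY by simp
    show "\<And>y. y \<in> ?Q ` Ycube 2 \<Longrightarrow> p \<le> y" using qBp xp by (auto simp: Ycube2)
    show "p \<in> ?Q ` Ycube 2" by (auto simp: Ycube2)
  qed
  then have p0eq: "p0 2 ?Q = (2 - \<epsilon>) / real n" by (simp add: p_def c_def N_def)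
  have "\<not> (\<exists>xs. pure_NE 2 n ?Q xs)"
    using no_NE[OF pp qBp xp tot np big hx1 hx2 hB] by blast
  moreover have "1 \<le> n" by (simp add: n_def)
  ultimately show ?thesis using dist p0eq by (intro exI[of _ 2] exI[of _ n] exI[of _ ?Q]) auto
qed

end
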